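(* Suppose that for each $k=1,\dots,K$ the Markov kernel $p_k$ on $\Theta$ is $\mu_k$-reversible. For $\sigma\in S_K$ define the swapped kernel $\mathbf p_\sigma(\boldsymbol\theta,\cdot)=p_{\sigma(1)}(\theta_1,\cdot)\times\dots\times p_{\sigma(K)}(\theta_K,\cdot)$, the swapped density $\boldsymbol\pi_\sigma(\boldsymbol\theta)=\prod_{k=1}^K\pi_{\sigma(k)}(\theta_k)$, and the weights $w_\sigma(\boldsymbol\theta)=\boldsymbol\pi_\sigma(\boldsymbol\theta)/\sum_{\sigma'\in S_K}\boldsymbol\pi_{\sigma'}(\boldsymbol\theta)$. Let the Weighted Generalized Parallel Tempering kernel be $\mathbf p^{(\mathrm W)}(\boldsymbol\theta,\cdot)=\sum_{\sigma\in S_K}w_\sigma(\boldsymbol\theta)\mathbf p_\sigma(\boldsymbol\theta,\cdot)$, and let $\boldsymbol\mu_{\mathrm W}=\frac{1}{|S_K|}\sum_{\sigma\in S_K}\boldsymbol\mu_\sigma$, where $\boldsymbol\mu_\sigma=\mu_{\sigma(1)}\times\dots\times\mu_{\sigma(K)}$; equivalently $\boldsymbol\mu_{\mathrm W}$ has $\boldsymbol\mu_{\mathrm{pr}}$-density $\boldsymbol\pi_{\mathrm W}=\frac{1}{|S_K|}\sum_{\sigma\in S_K}\boldsymbol\pi_\sigma$. Then the Markov chain generated by $\mathbf p^{(\mathrm W)}$ is $\boldsymbol\mu_{\mathrm W}$-reversible.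
   Context: Let $\Theta$ be a separable Banach space with Borel $\sigma$-algebra, $\mu_{\mathrm{pr}}$ a probability measure on $\Theta$, and $\Phi:\Theta\to\mathbb R$ a measurable potential. Fix $K\ge1$ and temperatures $1=T_1<\dots<T_K\le\infty$; $\mu_k$ is the probability measure with $\mu_{\mathrm{pr}}$-density $\pi_k(\theta)=e^{-\Phi(\theta)/T_k}/Z_k$, $Z_k=\int_\Theta e^{-\Phi/T_k}d\mu_{\mathrm{pr}}$ ($\mu_K=\mu_{\mathrm{pr}}$ if $T_K=\infty$). $\Theta^K$ carries the product $\sigma$-algebra, $\boldsymbol\mu_{\mathrm{pr}}=\mu_{\mathrm{pr}}^{\times K}$, and $S_K$ is a set of permutations of $\{1,\dots,K\}$ closed under inversion. A kernel $p$ is $\nu$-reversible if $\int_B p(\theta,A)\nu(d\theta)=\int_A p(\theta,B)\nu(d\theta)$ for all measurable $A,B$. *)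

theory Defs
  imports "HOL-Probability.Probability" "HOL-Combinatorics.Permutations"
begin

text \<open>The state space \<Theta> is a separable Banach space, i.e. a type of class
  banach + second_countable_topology, equipped with its Borel sigma-algebra.
  Indices run over {1..K}; a point of \<Theta>^K is a function nat => 'a,
  and \<Theta>^K carries the product sigma-algebra PiM {1..K} (\<lambda>_. borel).\<close>

definition markov_kernel :: "'b measure \<Rightarrow> ('b \<Rightarrow> 'b measure) \<Rightarrow> bool" where
  "markov_kernel M p \<longleftrightarrow> p \<in> M \<rightarrow>\<^sub>M prob_algebra M"

definition reversible :: "'b measure \<Rightarrow> ('b \<Rightarrow> 'b measure) \<Rightarrow> bool" where
  "reversible \<nu> p \<longleftrightarrow>
     (\<forall>A\<in>sets \<nu>. \<forall>B\<in>sets \<nu>.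
        (\<integral>\<^sup>+\<theta>\<in>B. emeasure (p \<theta>) A \<partial>\<nu>) = (\<integral>\<^sup>+\<theta>\<in>A. emeasure (p \<theta>) B \<partial>\<nu>))"

definition inv_temp :: "ereal \<Rightarrow> real" where
  "inv_temp T = (if T = \<infinity> then 0 else 1 / real_of_ereal T)"

definition Zc :: "'a measure \<Rightarrow> ('a \<Rightarrow> real) \<Rightarrow> ereal \<Rightarrow> real" where
  "Zc \<mu>pr \<Phi> T = (\<integral>\<theta>. exp (- \<Phi> \<theta> * inv_temp T) \<partial>\<mu>pr)"

definition tdens :: "'a measure \<Rightarrow> ('a \<Rightarrow> real) \<Rightarrow> ereal \<Rightarrow> 'a \<Rightarrow> real" where
  "tdens \<mu>pr \<Phi> T \<theta> = exp (- \<Phi> \<theta> * inv_temp T) / Zc \<mu>pr \<Phi> T"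

definition tmeasure :: "'a measure \<Rightarrow> ('a \<Rightarrow> real) \<Rightarrow> ereal \<Rightarrow> 'a measure" where
  "tmeasure \<mu>pr \<Phi> T = density \<mu>pr (\<lambda>\<theta>. ennreal (tdens \<mu>pr \<Phi> T \<theta>))"

definition swap_dens ::
  "nat \<Rightarrow> (nat \<Rightarrow> 'a \<Rightarrow> real) \<Rightarrow> (nat \<Rightarrow> nat) \<Rightarrow> (nat \<Rightarrow> 'a) \<Rightarrow> real" where
  "swap_dens K \<pi> \<sigma> \<theta> = (\<Prod>k\<in>{1..K}. \<pi> (\<sigma> k) (\<theta> k))"

definition swap_weight ::
  "nat \<Rightarrow> (nat \<Rightarrow> nat) set \<Rightarrow> (nat \<Rightarrow> 'a \<Rightarrow> real) \<Rightarrow> (nat \<Rightarrow> nat) \<Rightarrow> (nat \<Rightarrow> 'a) \<Rightarrow> real" where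
  "swap_weight K S \<pi> \<sigma> \<theta> = swap_dens K \<pi> \<sigma> \<theta> / (\<Sum>\<sigma>'\<in>S. swap_dens K \<pi> \<sigma>' \<theta>)"

definition swap_kernel ::
  "nat \<Rightarrow> (nat \<Rightarrow> 'a \<Rightarrow> 'a measure) \<Rightarrow> (nat \<Rightarrow> nat) \<Rightarrow> (nat \<Rightarrow> 'a) \<Rightarrow> (nat \<Rightarrow> 'a) measure" where
  "swap_kernel K p \<sigma> \<theta> = PiM {1..K} (\<lambda>k. p (\<sigma> k) (\<theta> k))"

definition wgpt_kernel ::
  "nat \<Rightarrow> (nat \<Rightarrow> nat) set \<Rightarrow> (nat \<Rightarrow> 'a::topological_space \<Rightarrow> real) \<Rightarrow> (nat \<Rightarrow> 'a \<Rightarrow> 'a measure)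
     \<Rightarrow> (nat \<Rightarrow> 'a) \<Rightarrow> (nat \<Rightarrow> 'a) measure" where
  "wgpt_kernel K S \<pi> p \<theta> =
     measure_of (space (PiM {1..K} (\<lambda>_. (borel :: 'a measure)))) (sets (PiM {1..K} (\<lambda>_. (borel :: 'a measure))))
       (\<lambda>A. \<Sum>\<sigma>\<in>S. ennreal (swap_weight K S \<pi> \<sigma> \<theta>) * emeasure (swap_kernel K p \<sigma> \<theta>) A)"

definition mu_W ::
  "nat \<Rightarrow> (nat \<Rightarrow> nat) set \<Rightarrow> 'a measure \<Rightarrow> (nat \<Rightarrow> 'a \<Rightarrow> real) \<Rightarrow> (nat \<Rightarrow> 'a) measure" where
  "mu_W K S \<mu>pr \<pi> = density (PiM {1..K} (\<lambda>_. \<mu>pr))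
      (\<lambda>\<theta>. ennreal ((1 / real (card S)) * (\<Sum>\<sigma>\<in>S. swap_dens K \<pi> \<sigma> \<theta>)))"

end

theory Submission imports Defs begin

lemma rev_extend1:
  fixes \<nu> :: "'b measure" and Q :: "'b \<Rightarrow> 'b measure"
  assumes fin: "finite_measure \<nu>"
    and Q: "Q \<in> \<nu> \<rightarrow>\<^sub>M subprob_algebra \<nu>"
    and G: "Int_stable G" "G \<subseteq> Pow (space \<nu>)" "sets \<nu> = sigma_sets (space \<nu>) G" "space \<nu> \<in> G"
    and B: "B \<in> sets \<nu>"
    and eq: "\<And>A. A \<in> G \<Longrightarrow> (\<integral>\<^sup>+\<theta>\<in>B. emeasure (Q \<theta>) A \<partial>\<nu>) = (\<integral>\<^sup>+\<theta>\<in>A. emeasure (Q \<theta>) B \<partial>\<nu>)"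
    and A: "A \<in> sets \<nu>"
  shows "(\<integral>\<^sup>+\<theta>\<in>B. emeasure (Q \<theta>) A \<partial>\<nu>) = (\<integral>\<^sup>+\<theta>\<in>A. emeasure (Q \<theta>) B \<partial>\<nu>)"
proof (cases "space \<nu> = {}")
  case True
  then have "A = {}" "B = {}" using sets.sets_into_space[OF A] sets.sets_into_space[OF B] by simp_all
  then show ?thesis by simp
next
  case ne: False
  interpret finite_measure \<nu> by (rule fin)
  have QB[measurable]: "(\<lambda>\<theta>. emeasure (Q \<theta>) B) \<in> borel_measurable \<nu>"
    using measurable_emeasure_kernel[OF Q B] .
  define \<mu>1 where "\<mu>1 = density \<nu> (indicator B) \<bind> Q"
  define \<mu>2 where "\<mu>2 = density \<nu> (\<lambda>\<theta>. emeasure (Q \<theta>) B)"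
  have sp: "space (density \<nu> (indicator B)) \<noteq> {}" using ne by simp
  have Q': "Q \<in> density \<nu> (indicator B) \<rightarrow>\<^sub>M subprob_algebra \<nu>"
    using Q by (subst measurable_cong_sets[OF sets_density refl])
  have e1: "emeasure \<mu>1 X = (\<integral>\<^sup>+\<theta>\<in>B. emeasure (Q \<theta>) X \<partial>\<nu>)" if X: "X \<in> sets \<nu>" for X
  proof -
    have "emeasure \<mu>1 X = (\<integral>\<^sup>+\<theta>. emeasure (Q \<theta>) X \<partial>density \<nu> (indicator B))"
      unfolding \<mu>1_def by (rule emeasure_bind[OF sp Q' X])
    also have "\<dots> = (\<integral>\<^sup>+\<theta>. indicator B \<theta> * emeasure (Q \<theta>) X \<partial>\<nu>)"
      using X by (subst nn_integral_density) (auto intro: measurable_emeasure_kernel[OF Q X] borel_measurable_indicator[OF B])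
    finally show ?thesis by (simp add: mult.commute)
  qed
  have e2: "emeasure \<mu>2 X = (\<integral>\<^sup>+\<theta>\<in>X. emeasure (Q \<theta>) B \<partial>\<nu>)" if X: "X \<in> sets \<nu>" for X
    unfolding \<mu>2_def using X by (subst emeasure_density) auto
  have s1: "sets \<mu>1 = sets \<nu>" unfolding \<mu>1_def
    by (rule sets_bind[OF _ sp]) (rule sets_kernel[OF Q'])
  have s2: "sets \<mu>2 = sets \<nu>" unfolding \<mu>2_def by simp
  have "\<mu>1 = \<mu>2"
  proof (rule measure_eqI_generator_eq[OF G(1,2), where A="\<lambda>_. space \<nu>"])
    fix X assume X: "X \<in> G"
    then have XS: "X \<in> sets \<nu>" using G(3) by (simp add: sigma_sets.Basic)
    show "emeasure \<mu>1 X = emeasure \<mu>2 X"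
      by (simp only: e1[OF XS] e2[OF XS] eq[OF X])
  next
    show "sets \<mu>1 = sigma_sets (space \<nu>) G" using s1 G(3) by simp
    show "sets \<mu>2 = sigma_sets (space \<nu>) G" using s2 G(3) by simp
    show "range (\<lambda>_. space \<nu>) \<subseteq> G" using G(4) by auto
    show "(\<Union>i. space \<nu>) = space \<nu>" by simp
    have "(\<integral>\<^sup>+\<theta>\<in>B. emeasure (Q \<theta>) (space \<nu>) \<partial>\<nu>) \<le> (\<integral>\<^sup>+\<theta>. 1 \<partial>\<nu>)"
    proof (rule nn_integral_mono)
      fix x assume x: "x \<in> space \<nu>"
      interpret subprob_space "Q x" using subprob_space_kernel[OF Q x] .
      have "emeasure (Q x) (space \<nu>) \<le> 1"
        using subprob_emeasure_le_1[of "space \<nu>"] .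
      then show "emeasure (Q x) (space \<nu>) * indicator B x \<le> 1"
        by (auto split: split_indicator)
    qed
    also have "\<dots> < \<infinity>" using emeasure_finite[of "space \<nu>"] by (simp add: less_top[symmetric])
    finally have "(\<integral>\<^sup>+\<theta>\<in>B. emeasure (Q \<theta>) (space \<nu>) \<partial>\<nu>) < \<infinity>" .
    then show "\<And>i. emeasure \<mu>1 (space \<nu>) \<noteq> \<infinity>" using e1[OF sets.top] by simp
  qed
  then show ?thesis using e1[OF A] e2[OF A] by simp
qed

lemma rev_extend:
  fixes \<nu> :: "'b measure" and Q :: "'b \<Rightarrow> 'b measure"
  assumes fin: "finite_measure \<nu>"
    and Q: "Q \<in> \<nu> \<rightarrow>\<^sub>M subprob_algebra \<nu>"
    and G: "Int_stable G" "G \<subseteq> Pow (space \<nu>)" "sets \<nu> = sigma_sets (space \<nu>) G" "space \<nu> \<in> G"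
    and eq: "\<And>A B. A \<in> G \<Longrightarrow> B \<in> G \<Longrightarrow> (\<integral>\<^sup>+\<theta>\<in>B. emeasure (Q \<theta>) A \<partial>\<nu>) = (\<integral>\<^sup>+\<theta>\<in>A. emeasure (Q \<theta>) B \<partial>\<nu>)"
  shows "reversible \<nu> Q"
  unfolding reversible_def
proof (intro ballI)
  fix A B assume A: "A \<in> sets \<nu>" and B: "B \<in> sets \<nu>"
  have GS: "X \<in> G \<Longrightarrow> X \<in> sets \<nu>" for X using G(3) by auto
  have step1: "(\<integral>\<^sup>+\<theta>\<in>Y. emeasure (Q \<theta>) X \<partial>\<nu>) = (\<integral>\<^sup>+\<theta>\<in>X. emeasure (Q \<theta>) Y \<partial>\<nu>)"
    if "Y \<in> G" "X \<in> sets \<nu>" for X Y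
    by (rule rev_extend1[OF fin Q G GS[OF that(1)] eq[OF _ that(1)] that(2)])
  have "(\<integral>\<^sup>+\<theta>\<in>A. emeasure (Q \<theta>) B \<partial>\<nu>) = (\<integral>\<^sup>+\<theta>\<in>B. emeasure (Q \<theta>) A \<partial>\<nu>)"
  proof (rule rev_extend1[OF fin Q G A _ B])
    fix X assume X: "X \<in> G"
    show "(\<integral>\<^sup>+\<theta>\<in>A. emeasure (Q \<theta>) X \<partial>\<nu>) = (\<integral>\<^sup>+\<theta>\<in>X. emeasure (Q \<theta>) A \<partial>\<nu>)"
      using step1[OF X A] by (rule sym)
  qed
  then show "(\<integral>\<^sup>+\<theta>\<in>B. emeasure (Q \<theta>) A \<partial>\<nu>) = (\<integral>\<^sup>+\<theta>\<in>A. emeasure (Q \<theta>) B \<partial>\<nu>)" by simp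
qed


lemma emeasure_PiM_fin:
  assumes "finite I" "\<And>i. i \<in> I \<Longrightarrow> prob_space (M i)" "\<And>i. i \<in> I \<Longrightarrow> A i \<in> sets (M i)"
  shows "emeasure (PiM I M) (PiE I A) = (\<Prod>i\<in>I. emeasure (M i) (A i))"
proof -
  define M' where "M' = (\<lambda>i. if i \<in> I then M i else count_space {undefined})"
  interpret M': prob_space "M' i" for i
    using assms(2) by (cases "i \<in> I") (auto simp: M'_def intro!: prob_spaceI)
  interpret product_prob_space M' I by unfold_locales
  have eq: "PiM I M = PiM I M'" by (rule PiM_cong) (auto simp: M'_def)
  have "emeasure (PiM I M') (PiE I A) = (\<Prod>i\<in>I. emeasure (M' i) (A i))"
    by (rule emeasure_PiM[OF assms(1)]) (use assms(3) in \<open>auto simp: M'_def\<close>)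
  also have "\<dots> = (\<Prod>i\<in>I. emeasure (M i) (A i))"
    by (rule prod.cong) (auto simp: M'_def)
  finally show ?thesis using eq by simp
qed

lemma indicator_PiE_prod:
  assumes "\<theta> \<in> extensional I" and fin: "finite I"
  shows "indicator (PiE I Y) \<theta> = (\<Prod>k\<in>I. indicator (Y k) (\<theta> k) :: ennreal)"
proof (cases "\<forall>k\<in>I. \<theta> k \<in> Y k")
  case True
  then have "\<theta> \<in> PiE I Y" using assms by (auto simp: PiE_iff)
  moreover have "(\<Prod>k\<in>I. indicator (Y k) (\<theta> k) :: ennreal) = (\<Prod>k\<in>I. 1)"
    by (rule prod.cong) (use True in auto)
  ultimately show ?thesis by simp
next
  case False
  then obtain k where k: "k \<in> I" "\<theta> k \<notin> Y k" by blast
  then have "\<theta> \<notin> PiE I Y" by (auto simp: PiE_iff)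
  moreover have "(\<Prod>k\<in>I. indicator (Y k) (\<theta> k) :: ennreal) = 0"
    by (rule prod_zero[OF fin bexI[of _ k]]) (use k in auto)
  ultimately show ?thesis by simp
qed

context
  fixes \<mu>pr :: "'a::topological_space measure" and I :: "nat set"
    and d :: "nat \<Rightarrow> 'a \<Rightarrow> real" and q :: "nat \<Rightarrow> 'a \<Rightarrow> 'a measure"
  assumes I: "finite I"
    and pr: "prob_space \<mu>pr" and prs: "sets \<mu>pr = sets borel"
    and dm: "\<And>k. k \<in> I \<Longrightarrow> d k \<in> borel_measurable borel"
    and dnn: "\<And>k x. k \<in> I \<Longrightarrow> 0 \<le> d k x"
    and dfin: "\<And>k. k \<in> I \<Longrightarrow> (\<integral>\<^sup>+x. ennreal (d k x) \<partial>\<mu>pr) \<noteq> \<infinity>"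
    and qk: "\<And>k. k \<in> I \<Longrightarrow> q k \<in> borel \<rightarrow>\<^sub>M prob_algebra borel"
    and qrev: "\<And>k. k \<in> I \<Longrightarrow> reversible (density \<mu>pr (\<lambda>x. ennreal (d k x))) (q k)"
begin

lemma space_pr: "space \<mu>pr = UNIV"
  using sets_eq_imp_space_eq[OF prs] by simp

lemma q_prob: "k \<in> I \<Longrightarrow> prob_space (q k x)"
  using measurable_space[OF qk[of k], of x] by (auto simp: space_prob_algebra)

lemma q_sets: "k \<in> I \<Longrightarrow> sets (q k x) = sets borel"
  using measurable_space[OF qk[of k], of x] by (auto simp: space_prob_algebra)

lemma q_sub: "k \<in> I \<Longrightarrow> q k \<in> \<mu>pr \<rightarrow>\<^sub>M subprob_algebra \<mu>pr"
proof -
  assume k: "k \<in> I"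
  have "subprob_algebra \<mu>pr = subprob_algebra borel" by (rule subprob_algebra_cong[OF prs])
  then show ?thesis using measurable_prob_algebraD[OF qk[OF k]]
    by (simp add: measurable_cong_sets[OF prs refl])
qed

lemma d_meas: "k \<in> I \<Longrightarrow> d k \<in> borel_measurable \<mu>pr"
  using dm by (simp add: measurable_cong_sets[OF prs refl])

lemma space_PM: "space (PiM I (\<lambda>_. \<mu>pr)) = PiE I (\<lambda>_. UNIV)"
  by (simp add: space_PiM space_pr)

lemma PM_prod_integral:
  assumes "\<And>k. k \<in> I \<Longrightarrow> f k \<in> borel_measurable \<mu>pr"
  shows "(\<integral>\<^sup>+\<theta>. (\<Prod>k\<in>I. f k (\<theta> k)) \<partial>PiM I (\<lambda>_. \<mu>pr)) = (\<Prod>k\<in>I. integral\<^sup>N \<mu>pr (f k))"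
proof -
  interpret P: product_sigma_finite "\<lambda>_. \<mu>pr"
    by (simp add: product_sigma_finite_def prob_space_imp_sigma_finite pr)
  show ?thesis by (rule P.product_nn_integral_prod[OF I assms])
qed

lemma Q_meas: "(\<lambda>\<theta>. PiM I (\<lambda>k. q k (\<theta> k))) \<in> PiM I (\<lambda>_. \<mu>pr) \<rightarrow>\<^sub>M prob_algebra (PiM I (\<lambda>_. \<mu>pr))"
proof (rule measurable_prob_algebra_generated[OF sets_PiM Int_stable_prod_algebra prod_algebra_sets_into_space])
  fix \<theta> assume "\<theta> \<in> space (PiM I (\<lambda>_. \<mu>pr))"
  show "prob_space (PiM I (\<lambda>k. q k (\<theta> k)))" by (rule prob_space_PiM) (rule q_prob)
  show "sets (PiM I (\<lambda>k. q k (\<theta> k))) = sets (PiM I (\<lambda>_. \<mu>pr))"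
    by (rule sets_PiM_cong) (auto simp: q_sets prs)
next
  fix A assume "A \<in> prod_algebra I (\<lambda>_. \<mu>pr)"
  then obtain E where A: "A = PiE I E" and E: "E \<in> (\<Pi> i\<in>I. sets \<mu>pr)" by (rule prod_algebraE_all)
  have m: "(\<lambda>\<theta>. \<Prod>k\<in>I. emeasure (q k (\<theta> k)) (E k)) \<in> borel_measurable (PiM I (\<lambda>_. \<mu>pr))"
  proof (rule borel_measurable_prod_ennreal)
    fix k assume k: "k \<in> I"
    show "(\<lambda>\<theta>. emeasure (q k (\<theta> k)) (E k)) \<in> borel_measurable (PiM I (\<lambda>_. \<mu>pr))"
      using measurable_compose[OF measurable_component_singleton[OF k] measurable_emeasure_kernel[OF q_sub[OF k], of "E k"]]
        E k by auto
  qed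
  have "emeasure (PiM I (\<lambda>k. q k (\<theta> k))) A = (\<Prod>k\<in>I. emeasure (q k (\<theta> k)) (E k))" for \<theta>
    unfolding A using E by (intro emeasure_PiM_fin[OF I q_prob]) (auto simp: q_sets prs)
  then show "(\<lambda>\<theta>. emeasure (PiM I (\<lambda>k. q k (\<theta> k))) A) \<in> borel_measurable (PiM I (\<lambda>_. \<mu>pr))"
    using m by simp
qed

lemma D_meas: "(\<lambda>\<theta>. ennreal (\<Prod>k\<in>I. d k (\<theta> k))) \<in> borel_measurable (PiM I (\<lambda>_. \<mu>pr))"
proof -
  have "(\<lambda>\<theta>. (\<Prod>k\<in>I. d k (\<theta> k))) \<in> borel_measurable (PiM I (\<lambda>_. \<mu>pr))"
  proof (rule borel_measurable_prod)
    fix k assume k: "k \<in> I"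
    show "(\<lambda>\<theta>. d k (\<theta> k)) \<in> borel_measurable (PiM I (\<lambda>_. \<mu>pr))"
      using measurable_compose[OF measurable_component_singleton[OF k] d_meas[OF k]] .
  qed
  then show ?thesis by simp
qed

lemma rect:
  assumes X: "\<And>k. k \<in> I \<Longrightarrow> X k \<in> sets borel" and Y: "\<And>k. k \<in> I \<Longrightarrow> Y k \<in> sets borel"
  shows "(\<integral>\<^sup>+\<theta>\<in>PiE I Y. emeasure (PiM I (\<lambda>k. q k (\<theta> k))) (PiE I X) \<partial>density (PiM I (\<lambda>_. \<mu>pr)) (\<lambda>\<theta>. ennreal (\<Prod>k\<in>I. d k (\<theta> k))))
       = (\<Prod>k\<in>I. \<integral>\<^sup>+x\<in>Y k. emeasure (q k x) (X k) \<partial>density \<mu>pr (\<lambda>x. ennreal (d k x)))"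
proof -
  let ?PM = "PiM I (\<lambda>_. \<mu>pr)"
  have XS: "PiE I X \<in> sets ?PM" "PiE I Y \<in> sets ?PM"
    using X Y by (auto intro!: sets_PiM_I_finite[OF I] simp: prs)
  have mg: "(\<lambda>\<theta>. emeasure (PiM I (\<lambda>k. q k (\<theta> k))) (PiE I X) * indicator (PiE I Y) \<theta>) \<in> borel_measurable ?PM"
    using measurable_emeasure_kernel[OF measurable_prob_algebraD[OF Q_meas] XS(1)] borel_measurable_indicator[OF XS(2)]
    by (rule borel_measurable_times_ennreal)
  have "(\<integral>\<^sup>+\<theta>\<in>PiE I Y. emeasure (PiM I (\<lambda>k. q k (\<theta> k))) (PiE I X) \<partial>density ?PM (\<lambda>\<theta>. ennreal (\<Prod>k\<in>I. d k (\<theta> k))))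
     = (\<integral>\<^sup>+\<theta>. ennreal (\<Prod>k\<in>I. d k (\<theta> k)) * (emeasure (PiM I (\<lambda>k. q k (\<theta> k))) (PiE I X) * indicator (PiE I Y) \<theta>) \<partial>?PM)"
    by (rule nn_integral_density[OF D_meas mg])
  also have "\<dots> = (\<integral>\<^sup>+\<theta>. (\<Prod>k\<in>I. ennreal (d k (\<theta> k)) * (emeasure (q k (\<theta> k)) (X k) * indicator (Y k) (\<theta> k))) \<partial>?PM)"
  proof (rule nn_integral_cong)
    fix \<theta> assume "\<theta> \<in> space ?PM"
    then have ext: "\<theta> \<in> extensional I" by (simp add: space_PM PiE_iff)
    have e1: "emeasure (PiM I (\<lambda>k. q k (\<theta> k))) (PiE I X) = (\<Prod>k\<in>I. emeasure (q k (\<theta> k)) (X k))"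
      using X by (intro emeasure_PiM_fin[OF I q_prob]) (auto simp: q_sets)
    have e2: "ennreal (\<Prod>k\<in>I. d k (\<theta> k)) = (\<Prod>k\<in>I. ennreal (d k (\<theta> k)))"
      by (rule prod_ennreal[symmetric]) (rule dnn)
    show "ennreal (\<Prod>k\<in>I. d k (\<theta> k)) * (emeasure (PiM I (\<lambda>k. q k (\<theta> k))) (PiE I X) * indicator (PiE I Y) \<theta>)
      = (\<Prod>k\<in>I. ennreal (d k (\<theta> k)) * (emeasure (q k (\<theta> k)) (X k) * indicator (Y k) (\<theta> k)))"
      unfolding e1 e2 indicator_PiE_prod[OF ext I] by (simp add: prod.distrib)
  qed
  also have "\<dots> = (\<Prod>k\<in>I. \<integral>\<^sup>+x. ennreal (d k x) * (emeasure (q k x) (X k) * indicator (Y k) x) \<partial>\<mu>pr)"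
  proof (rule PM_prod_integral)
    fix k assume k: "k \<in> I"
    have "Y k \<in> sets \<mu>pr" using Y k prs by simp
    then show "(\<lambda>x. ennreal (d k x) * (emeasure (q k x) (X k) * indicator (Y k) x)) \<in> borel_measurable \<mu>pr"
      using d_meas[OF k] measurable_emeasure_kernel[OF q_sub[OF k], of "X k"] X[OF k] prs
      by (intro borel_measurable_times_ennreal) auto
  qed
  also have "\<dots> = (\<Prod>k\<in>I. \<integral>\<^sup>+x\<in>Y k. emeasure (q k x) (X k) \<partial>density \<mu>pr (\<lambda>x. ennreal (d k x)))"
  proof (rule prod.cong[OF refl])
    fix k assume k: "k \<in> I"
    have "Y k \<in> sets \<mu>pr" using Y k prs by simp
    then show "(\<integral>\<^sup>+x. ennreal (d k x) * (emeasure (q k x) (X k) * indicator (Y k) x) \<partial>\<mu>pr)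
      = (\<integral>\<^sup>+x\<in>Y k. emeasure (q k x) (X k) \<partial>density \<mu>pr (\<lambda>x. ennreal (d k x)))"
      using d_meas[OF k] measurable_emeasure_kernel[OF q_sub[OF k], of "X k"] X[OF k] prs
      by (subst nn_integral_density) (auto intro!: borel_measurable_times_ennreal)
  qed
  finally show ?thesis .
qed

lemma prod_reversible:
  "reversible (density (PiM I (\<lambda>_. \<mu>pr)) (\<lambda>\<theta>. ennreal (\<Prod>k\<in>I. d k (\<theta> k))))
              (\<lambda>\<theta>. PiM I (\<lambda>k. q k (\<theta> k)))"
proof -
  let ?PM = "PiM I (\<lambda>_. \<mu>pr)"
  let ?\<nu> = "density ?PM (\<lambda>\<theta>. ennreal (\<Prod>k\<in>I. d k (\<theta> k)))"
  have sp: "space ?\<nu> = PiE I (\<lambda>_. space \<mu>pr)" by (simp add: space_PiM)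
  show ?thesis
  proof (rule rev_extend[where G = "prod_algebra I (\<lambda>_. \<mu>pr)"])
    have "emeasure ?\<nu> (space ?\<nu>) = (\<integral>\<^sup>+\<theta>. ennreal (\<Prod>k\<in>I. d k (\<theta> k)) * indicator (space ?PM) \<theta> \<partial>?PM)"
      by (subst emeasure_density[OF D_meas]) auto
    also have "\<dots> = (\<integral>\<^sup>+\<theta>. (\<Prod>k\<in>I. ennreal (d k (\<theta> k))) \<partial>?PM)"
      by (rule nn_integral_cong) (simp add: prod_ennreal dnn)
    also have "\<dots> = (\<Prod>k\<in>I. \<integral>\<^sup>+x. ennreal (d k x) \<partial>\<mu>pr)"
      by (rule PM_prod_integral) (use d_meas in auto)
    finally show "finite_measure ?\<nu>"
      using dfin by (intro finite_measureI) (simp add: ennreal_prod_eq_top)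
  next
    have "subprob_algebra ?\<nu> = subprob_algebra ?PM" by (rule subprob_algebra_cong) simp
    then show "(\<lambda>\<theta>. PiM I (\<lambda>k. q k (\<theta> k))) \<in> ?\<nu> \<rightarrow>\<^sub>M subprob_algebra ?\<nu>"
      using measurable_prob_algebraD[OF Q_meas]
      by (simp add: measurable_cong_sets[OF sets_density refl])
  next
    show "Int_stable (prod_algebra I (\<lambda>_. \<mu>pr))" by (rule Int_stable_prod_algebra)
    show "prod_algebra I (\<lambda>_. \<mu>pr) \<subseteq> Pow (space ?\<nu>)"
      using prod_algebra_sets_into_space[of I "\<lambda>_. \<mu>pr"] sp by simp
    show "sets ?\<nu> = sigma_sets (space ?\<nu>) (prod_algebra I (\<lambda>_. \<mu>pr))"
      using sp by (simp add: sets_PiM)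
    show "space ?\<nu> \<in> prod_algebra I (\<lambda>_. \<mu>pr)"
      unfolding sp by (rule prod_algebraI_finite[OF I]) simp
  next
    fix A B assume A: "A \<in> prod_algebra I (\<lambda>_. \<mu>pr)" and B: "B \<in> prod_algebra I (\<lambda>_. \<mu>pr)"
    obtain X where X: "A = PiE I X" "X \<in> (\<Pi> i\<in>I. sets \<mu>pr)" using A by (rule prod_algebraE_all)
    obtain Y where Y: "B = PiE I Y" "Y \<in> (\<Pi> i\<in>I. sets \<mu>pr)" using B by (rule prod_algebraE_all)
    have Xb: "\<And>k. k \<in> I \<Longrightarrow> X k \<in> sets borel" and Yb: "\<And>k. k \<in> I \<Longrightarrow> Y k \<in> sets borel"
      using X(2) Y(2) prs by auto
    have sw: "(\<integral>\<^sup>+x\<in>Y k. emeasure (q k x) (X k) \<partial>density \<mu>pr (\<lambda>x. ennreal (d k x)))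
            = (\<integral>\<^sup>+x\<in>X k. emeasure (q k x) (Y k) \<partial>density \<mu>pr (\<lambda>x. ennreal (d k x)))" if k: "k \<in> I" for k
      using qrev[OF k] Xb[OF k] Yb[OF k] prs unfolding reversible_def by simp
    show "(\<integral>\<^sup>+\<theta>\<in>B. emeasure (PiM I (\<lambda>k. q k (\<theta> k))) A \<partial>?\<nu>) = (\<integral>\<^sup>+\<theta>\<in>A. emeasure (PiM I (\<lambda>k. q k (\<theta> k))) B \<partial>?\<nu>)"
      unfolding X(1) Y(1) by (simp only: rect[OF Xb Yb] rect[OF Yb Xb]) (intro prod.cong refl sw)
  qed
qed

end


lemma pw_alg:
  fixes a :: "'s \<Rightarrow> real" and E :: "'s \<Rightarrow> ennreal" and c :: real and i :: ennreal
  assumes S: "finite S" and a: "\<And>s. s \<in> S \<Longrightarrow> 0 \<le> a s" and c: "0 \<le> c"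
  shows "ennreal (c * (\<Sum>s\<in>S. a s)) * ((\<Sum>s\<in>S. ennreal (a s / (\<Sum>s\<in>S. a s)) * E s) * i)
       = (\<Sum>s\<in>S. ennreal c * (ennreal (a s) * (E s * i)))"
proof -
  let ?D = "\<Sum>s\<in>S. a s"
  have D: "0 \<le> ?D" using a by (simp add: sum_nonneg)
  have key: "ennreal (c * ?D) * ennreal (a s / ?D) = ennreal c * ennreal (a s)" if s: "s \<in> S" for s
  proof (cases "?D = 0")
    case True
    then have "a s = 0" using sum_nonneg_eq_0_iff[OF S] a s by blast
    then show ?thesis using True by simp
  next
    case False
    have "ennreal (c * ?D) * ennreal (a s / ?D) = ennreal (c * ?D * (a s / ?D))"
      using a[OF s] c D by (intro ennreal_mult[symmetric]) auto
    also have "\<dots> = ennreal (c * a s)" using False by simp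
    also have "\<dots> = ennreal c * ennreal (a s)" using a[OF s] c by (intro ennreal_mult) auto
    finally show ?thesis .
  qed
  have "ennreal (c * ?D) * ((\<Sum>s\<in>S. ennreal (a s / ?D) * E s) * i)
      = (\<Sum>s\<in>S. ennreal (c * ?D) * (ennreal (a s / ?D) * E s * i))"
    by (simp add: sum_distrib_left sum_distrib_right)
  also have "\<dots> = (\<Sum>s\<in>S. ennreal c * (ennreal (a s) * (E s * i)))"
  proof (rule sum.cong[OF refl])
    fix s assume s: "s \<in> S"
    have "ennreal (c * ?D) * (ennreal (a s / ?D) * E s * i) = (ennreal (c * ?D) * ennreal (a s / ?D)) * (E s * i)"
      by (simp add: mult.assoc)
    also have "\<dots> = ennreal c * (ennreal (a s) * (E s * i))" unfolding key[OF s] by (simp add: mult.assoc)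
    finally show "ennreal (c * ?D) * (ennreal (a s / ?D) * E s * i) = ennreal c * (ennreal (a s) * (E s * i))" .
  qed
  finally show ?thesis .
qed

theorem proposition4:
  fixes \<mu>pr :: "'a::{banach, second_countable_topology} measure"
    and \<Phi> :: "'a \<Rightarrow> real"
    and K :: nat
    and T :: "nat \<Rightarrow> ereal"
    and S :: "(nat \<Rightarrow> nat) set"
    and p :: "nat \<Rightarrow> 'a \<Rightarrow> 'a measure"
  assumes prior: "prob_space \<mu>pr" "sets \<mu>pr = sets borel"
    and Phi_meas: "\<Phi> \<in> borel_measurable borel"
    and Z_finite: "integrable \<mu>pr (\<lambda>\<theta>. exp (- \<Phi> \<theta>))"
    and K: "K \<ge> 1"
    and T1: "T 1 = 1"
    and Tmono: "\<And>i j. 1 \<le> i \<Longrightarrow> i < j \<Longrightarrow> j \<le> K \<Longrightarrow> T i < T j"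
    and S_perm: "\<And>\<sigma>. \<sigma> \<in> S \<Longrightarrow> \<sigma> permutes {1..K}"
    and S_inv: "\<And>\<sigma>. \<sigma> \<in> S \<Longrightarrow> inv \<sigma> \<in> S"
    and S_ne: "S \<noteq> {}"
    and kern: "\<And>k. k \<in> {1..K} \<Longrightarrow> markov_kernel borel (p k)"
    and rev: "\<And>k. k \<in> {1..K} \<Longrightarrow> reversible (tmeasure \<mu>pr \<Phi> (T k)) (p k)"
  shows "reversible (mu_W K S \<mu>pr (\<lambda>k. tdens \<mu>pr \<Phi> (T k)))
                    (wgpt_kernel K S (\<lambda>k. tdens \<mu>pr \<Phi> (T k)) p)"
proof -
  define \<pi> where "\<pi> = (\<lambda>k. tdens \<mu>pr \<Phi> (T k))"
  let ?PM = "PiM {1..K} (\<lambda>_. \<mu>pr)"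
  let ?PB = "PiM {1..K} (\<lambda>_. (borel :: 'a measure))"
  have finS: "finite S"
    by (rule finite_subset[OF _ finite_permutations[OF finite_atLeastAtMost[of 1 K]]]) (use S_perm in blast)
  have cardS: "card S > 0" using finS S_ne by (simp add: card_gt_0_iff)
  note Phi_meas[measurable]
  have \<pi>_meas: "\<pi> j \<in> borel_measurable borel" for j
    unfolding \<pi>_def tdens_def by measurable
  have \<pi>_meas': "\<pi> j \<in> borel_measurable \<mu>pr" for j
    using \<pi>_meas by (simp add: measurable_cong_sets[OF prior(2) refl])
  have \<pi>_nn: "0 \<le> \<pi> j x" for j x
    unfolding \<pi>_def tdens_def Zc_def
    by (intro divide_nonneg_nonneg integral_nonneg_AE AE_I2) auto
  have \<pi>_int: "integrable \<mu>pr (\<pi> j)" for j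
  proof (cases "integrable \<mu>pr (\<lambda>\<theta>. exp (- \<Phi> \<theta> * inv_temp (T j)))")
    case True
    then show ?thesis unfolding \<pi>_def tdens_def[abs_def] by (intro integrable_divide_zero)
  next
    case False
    then have "Zc \<mu>pr \<Phi> (T j) = 0" unfolding Zc_def by (rule not_integrable_integral_eq)
    then show ?thesis unfolding \<pi>_def tdens_def[abs_def] by simp
  qed
  have \<pi>_fin: "(\<integral>\<^sup>+x. ennreal (\<pi> j x) \<partial>\<mu>pr) \<noteq> \<infinity>" for j
    using nn_integral_eq_integral[OF \<pi>_int AE_I2[OF \<pi>_nn]] by simp
  have \<sigma>I: "\<sigma> k \<in> {1..K}" if "\<sigma> \<in> S" "k \<in> {1..K}" for \<sigma> k
    using permutes_in_image[OF S_perm[OF that(1)]] that(2) by simp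
  have qk: "p (\<sigma> k) \<in> borel \<rightarrow>\<^sub>M prob_algebra borel" if "\<sigma> \<in> S" "k \<in> {1..K}" for \<sigma> k
    using kern[OF \<sigma>I[OF that]] unfolding markov_kernel_def .
  have qrev: "reversible (density \<mu>pr (\<lambda>x. ennreal (\<pi> (\<sigma> k) x))) (p (\<sigma> k))" if "\<sigma> \<in> S" "k \<in> {1..K}" for \<sigma> k
    using rev[OF \<sigma>I[OF that]] unfolding tmeasure_def \<pi>_def .
  have SK_eq: "swap_kernel K p \<sigma> = (\<lambda>\<theta>. PiM {1..K} (\<lambda>k. p (\<sigma> k) (\<theta> k)))" for \<sigma>
    by (simp add: fun_eq_iff swap_kernel_def)
  have rev\<sigma>: "reversible (density ?PM (\<lambda>\<theta>. ennreal (swap_dens K \<pi> \<sigma> \<theta>))) (swap_kernel K p \<sigma>)"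
    if \<sigma>: "\<sigma> \<in> S" for \<sigma>
    unfolding SK_eq swap_dens_def
    by (rule prod_reversible[where d="\<lambda>k. \<pi> (\<sigma> k)" and q="\<lambda>k. p (\<sigma> k)", OF finite_atLeastAtMost prior \<pi>_meas \<pi>_nn \<pi>_fin qk[OF \<sigma>] qrev[OF \<sigma>]])
  have SK_meas: "swap_kernel K p \<sigma> \<in> ?PM \<rightarrow>\<^sub>M subprob_algebra ?PM" if \<sigma>: "\<sigma> \<in> S" for \<sigma>
    unfolding SK_eq
    by (rule measurable_prob_algebraD[OF Q_meas[where d="\<lambda>k. \<pi> (\<sigma> k)" and q="\<lambda>k. p (\<sigma> k)", OF finite_atLeastAtMost prior \<pi>_meas \<pi>_nn \<pi>_fin qk[OF \<sigma>] qrev[OF \<sigma>]]])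
  have sPM: "sets ?PM = sets ?PB" by (rule sets_PiM_cong) (auto simp: prior)
  have spPM: "space ?PM = space ?PB" by (rule sets_eq_imp_space_eq[OF sPM])
  have sd_meas: "(\<lambda>\<theta>. swap_dens K \<pi> \<sigma> \<theta>) \<in> borel_measurable ?PM" for \<sigma>
    unfolding swap_dens_def
  proof (rule borel_measurable_prod)
    fix k assume k: "k \<in> {1..K}"
    show "(\<lambda>\<theta>. \<pi> (\<sigma> k) (\<theta> k)) \<in> borel_measurable ?PM"
      using measurable_compose[OF measurable_component_singleton[OF k] \<pi>_meas'] .
  qed
  have sd_nn: "0 \<le> swap_dens K \<pi> \<sigma> \<theta>" for \<sigma> \<theta>
    unfolding swap_dens_def by (intro prod_nonneg) (simp add: \<pi>_nn)
  have sw_meas: "(\<lambda>\<theta>. ennreal (swap_weight K S \<pi> \<sigma> \<theta>)) \<in> borel_measurable ?PM" for \<sigma>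
  proof -
    have "(\<lambda>\<theta>. swap_weight K S \<pi> \<sigma> \<theta>) \<in> borel_measurable ?PM"
      unfolding swap_weight_def by (intro borel_measurable_divide borel_measurable_sum sd_meas)
    then show ?thesis by measurable
  qed
  have W1: "emeasure (wgpt_kernel K S \<pi> p \<theta>) A
        = (\<Sum>\<sigma>\<in>S. ennreal (swap_weight K S \<pi> \<sigma> \<theta>) * emeasure (swap_kernel K p \<sigma> \<theta>) A)"
    if \<theta>: "\<theta> \<in> space ?PM" and A: "A \<in> sets ?PM" for \<theta> A
  proof -
    have SKs: "sets (swap_kernel K p \<sigma> \<theta>) = sets ?PB" if "\<sigma> \<in> S" for \<sigma>
      using sets_kernel[OF SK_meas[OF that] \<theta>] sPM by simp
    show ?thesis
      unfolding wgpt_kernel_def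
    proof (rule emeasure_measure_of_sigma)
      show "sigma_algebra (space ?PB) (sets ?PB)" by (rule sets.sigma_algebra_axioms)
      show "positive (sets ?PB) (\<lambda>A. \<Sum>\<sigma>\<in>S. ennreal (swap_weight K S \<pi> \<sigma> \<theta>) * emeasure (swap_kernel K p \<sigma> \<theta>) A)"
        by (simp add: positive_def)
      show "A \<in> sets ?PB" using A sPM by simp
      show "countably_additive (sets ?PB) (\<lambda>A. \<Sum>\<sigma>\<in>S. ennreal (swap_weight K S \<pi> \<sigma> \<theta>) * emeasure (swap_kernel K p \<sigma> \<theta>) A)"
      proof (rule countably_additiveI)
        fix F :: "nat \<Rightarrow> (nat \<Rightarrow> 'a) set"
        assume F: "range F \<subseteq> sets ?PB" "disjoint_family F" "(\<Union>i. F i) \<in> sets ?PB"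
        have "(\<Sum>i. \<Sum>\<sigma>\<in>S. ennreal (swap_weight K S \<pi> \<sigma> \<theta>) * emeasure (swap_kernel K p \<sigma> \<theta>) (F i))
            = (\<Sum>\<sigma>\<in>S. \<Sum>i. ennreal (swap_weight K S \<pi> \<sigma> \<theta>) * emeasure (swap_kernel K p \<sigma> \<theta>) (F i))"
          by (rule suminf_sum) (rule summableI)
        also have "\<dots> = (\<Sum>\<sigma>\<in>S. ennreal (swap_weight K S \<pi> \<sigma> \<theta>) * emeasure (swap_kernel K p \<sigma> \<theta>) (\<Union>i. F i))"
        proof (rule sum.cong[OF refl])
          fix \<sigma> assume \<sigma>: "\<sigma> \<in> S"
          have "(\<Sum>i. emeasure (swap_kernel K p \<sigma> \<theta>) (F i)) = emeasure (swap_kernel K p \<sigma> \<theta>) (\<Union>i. F i)"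
            using F SKs[OF \<sigma>] by (intro suminf_emeasure) auto
          then show "(\<Sum>i. ennreal (swap_weight K S \<pi> \<sigma> \<theta>) * emeasure (swap_kernel K p \<sigma> \<theta>) (F i))
              = ennreal (swap_weight K S \<pi> \<sigma> \<theta>) * emeasure (swap_kernel K p \<sigma> \<theta>) (\<Union>i. F i)"
            by simp
        qed
        finally show "(\<Sum>i. \<Sum>\<sigma>\<in>S. ennreal (swap_weight K S \<pi> \<sigma> \<theta>) * emeasure (swap_kernel K p \<sigma> \<theta>) (F i))
            = (\<Sum>\<sigma>\<in>S. ennreal (swap_weight K S \<pi> \<sigma> \<theta>) * emeasure (swap_kernel K p \<sigma> \<theta>) (\<Union>i. F i))" .
      qed
    qed
  qed
  define c where "c = 1 / real (card S)"
  have c: "0 \<le> c" by (simp add: c_def)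
  define L where "L \<sigma> A B = (\<integral>\<^sup>+\<theta>\<in>B. emeasure (swap_kernel K p \<sigma> \<theta>) A \<partial>density ?PM (\<lambda>\<theta>. ennreal (swap_dens K \<pi> \<sigma> \<theta>)))" for \<sigma> A B
  have LW: "(\<integral>\<^sup>+\<theta>\<in>B. emeasure (wgpt_kernel K S \<pi> p \<theta>) A \<partial>mu_W K S \<mu>pr \<pi>) = (\<Sum>\<sigma>\<in>S. ennreal c * L \<sigma> A B)"
    if A: "A \<in> sets ?PM" and B: "B \<in> sets ?PM" for A B
  proof -
    have mSK: "(\<lambda>\<theta>. emeasure (swap_kernel K p \<sigma> \<theta>) A) \<in> borel_measurable ?PM" if "\<sigma> \<in> S" for \<sigma>
      using measurable_emeasure_kernel[OF SK_meas[OF that] A] .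
    have mB: "indicator B \<in> borel_measurable ?PM" using B by simp
    have mS: "(\<lambda>\<theta>. (\<Sum>\<sigma>\<in>S. ennreal (swap_weight K S \<pi> \<sigma> \<theta>) * emeasure (swap_kernel K p \<sigma> \<theta>) A) * indicator B \<theta>) \<in> borel_measurable ?PM"
      by (intro borel_measurable_times_ennreal borel_measurable_sum mB sw_meas mSK)
    have mW: "(\<lambda>\<theta>. emeasure (wgpt_kernel K S \<pi> p \<theta>) A * indicator B \<theta>) \<in> borel_measurable ?PM"
      using mS by (rule measurable_cong[THEN iffD1, rotated]) (simp add: W1[OF _ A])
    have mF: "(\<lambda>\<theta>. ennreal (1 / real (card S) * (\<Sum>\<sigma>\<in>S. swap_dens K \<pi> \<sigma> \<theta>))) \<in> borel_measurable ?PM"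
    proof -
      have "(\<lambda>\<theta>. 1 / real (card S) * (\<Sum>\<sigma>\<in>S. swap_dens K \<pi> \<sigma> \<theta>)) \<in> borel_measurable ?PM"
        by (intro borel_measurable_times borel_measurable_const borel_measurable_sum sd_meas)
      then show ?thesis by measurable
    qed
    have "(\<integral>\<^sup>+\<theta>\<in>B. emeasure (wgpt_kernel K S \<pi> p \<theta>) A \<partial>mu_W K S \<mu>pr \<pi>)
        = (\<integral>\<^sup>+\<theta>. ennreal (c * (\<Sum>\<sigma>\<in>S. swap_dens K \<pi> \<sigma> \<theta>)) * (emeasure (wgpt_kernel K S \<pi> p \<theta>) A * indicator B \<theta>) \<partial>?PM)"
      unfolding mu_W_def c_def by (rule nn_integral_density[OF mF mW])
    also have "\<dots> = (\<integral>\<^sup>+\<theta>. (\<Sum>\<sigma>\<in>S. ennreal c * (ennreal (swap_dens K \<pi> \<sigma> \<theta>) * (emeasure (swap_kernel K p \<sigma> \<theta>) A * indicator B \<theta>))) \<partial>?PM)"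
    proof (rule nn_integral_cong)
      fix \<theta> assume \<theta>: "\<theta> \<in> space ?PM"
      show "ennreal (c * (\<Sum>\<sigma>\<in>S. swap_dens K \<pi> \<sigma> \<theta>)) * (emeasure (wgpt_kernel K S \<pi> p \<theta>) A * indicator B \<theta>)
          = (\<Sum>\<sigma>\<in>S. ennreal c * (ennreal (swap_dens K \<pi> \<sigma> \<theta>) * (emeasure (swap_kernel K p \<sigma> \<theta>) A * indicator B \<theta>)))"
        unfolding W1[OF \<theta> A] swap_weight_def
        by (rule pw_alg[OF finS sd_nn c])
    qed
    also have "\<dots> = (\<Sum>\<sigma>\<in>S. \<integral>\<^sup>+\<theta>. ennreal c * (ennreal (swap_dens K \<pi> \<sigma> \<theta>) * (emeasure (swap_kernel K p \<sigma> \<theta>) A * indicator B \<theta>)) \<partial>?PM)"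
      by (rule nn_integral_sum) (intro borel_measurable_times_ennreal borel_measurable_const mB mSK measurable_compose[OF sd_meas measurable_ennreal])
    also have "\<dots> = (\<Sum>\<sigma>\<in>S. ennreal c * L \<sigma> A B)"
    proof (rule sum.cong[OF refl])
      fix \<sigma> assume \<sigma>: "\<sigma> \<in> S"
      have m1: "(\<lambda>\<theta>. ennreal (swap_dens K \<pi> \<sigma> \<theta>)) \<in> borel_measurable ?PM"
        using measurable_compose[OF sd_meas measurable_ennreal] .
      have m2: "(\<lambda>\<theta>. emeasure (swap_kernel K p \<sigma> \<theta>) A * indicator B \<theta>) \<in> borel_measurable ?PM"
        by (intro borel_measurable_times_ennreal mB mSK[OF \<sigma>])
      show "(\<integral>\<^sup>+\<theta>. ennreal c * (ennreal (swap_dens K \<pi> \<sigma> \<theta>) * (emeasure (swap_kernel K p \<sigma> \<theta>) A * indicator B \<theta>)) \<partial>?PM)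
          = ennreal c * L \<sigma> A B"
        unfolding L_def nn_integral_density[OF m1 m2]
        by (rule nn_integral_cmult) (intro borel_measurable_times_ennreal m1 m2)
    qed
    finally show ?thesis .
  qed
  have Lsym: "L \<sigma> A B = L \<sigma> B A" if "\<sigma> \<in> S" "A \<in> sets ?PM" "B \<in> sets ?PM" for \<sigma> A B
    using rev\<sigma>[OF that(1)] that(2,3) unfolding reversible_def L_def by simp
  have "reversible (mu_W K S \<mu>pr \<pi>) (wgpt_kernel K S \<pi> p)"
    unfolding reversible_def
  proof (intro ballI)
    fix A B assume "A \<in> sets (mu_W K S \<mu>pr \<pi>)" "B \<in> sets (mu_W K S \<mu>pr \<pi>)"
    then have A: "A \<in> sets ?PM" and B: "B \<in> sets ?PM" by (simp_all add: mu_W_def)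
    show "(\<integral>\<^sup>+\<theta>\<in>B. emeasure (wgpt_kernel K S \<pi> p \<theta>) A \<partial>mu_W K S \<mu>pr \<pi>) = (\<integral>\<^sup>+\<theta>\<in>A. emeasure (wgpt_kernel K S \<pi> p \<theta>) B \<partial>mu_W K S \<mu>pr \<pi>)"
      unfolding LW[OF A B] LW[OF B A] using Lsym[OF _ A B] by (intro sum.cong refl) simp
  qed
  then show ?thesis unfolding \<pi>_def .
qed

end
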